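(* Let $X$ be a connected precolored graph and $Y$ any precolored graph. Then $A(\overline X*Y)=A(X*Y)$, i.e. the two quotients of $A(X_{N})$ ($N$ the number of vertices of $X*Y$) defined by $\overline X*Y$ and by $X*Y$ coincide (the identity on generators induces an isomorphism).
   Context: A precolored graph $X=(V,E)$ is a finite set $V$ with a family $E=\{E_1,\dots,E_p\}$ of disjoint subsets of $V\times V-\Delta_V$. Its completion $\overline X=(V,\overline E)$ is the colored graph with partition $\overline E=\{E_1,\dots,E_p,E_{p+1}\}$ of $V\times V-\Delta_V$, where $E_{p+1}$ is the set of remaining (missing) pairs. $X$ is connected if the oriented graph $(V,\bigcup_iE_i)$ is connected disregarding orientations. For a colored graph with partition $\{C_1,\dots,C_\ell\}$ on $N$ vertices, its Laplacian is $d_{xx}=0$, $d_{xy}=c(k)$ for $(x,y)\in C_k$ ($c$ injective into ${\mathbb C}$), and $A(\cdot)$ is the quotient of $A(X_N)$ (the universal C*-algebra generated by the entries of an $N\times N$ magic biunitary $w$, i.e. projections with rows and columns summing to $1$) by $wd=dw$; for a precolored graph $X$, $A(X):=A(\overline X)$. Free product (also for precolored graphs): for $X=(T,\{E_r\}_{r\le p})$, $Y=(Z,\{F_s\}_{s\le q})$, $X*Y=(T\times Z,\{E_r^\circ\}\cup\{F_s^\circ\})$ with $E_r^\circ=\{(i\alpha,j\alpha)\mid(i,j)\in E_r,\alpha\in Z\}$, $F_s^\circ=\{(i\alpha,j\beta)\mid i,j\in T,(\alpha,\beta)\in F_s\}$. *)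

theory Defs
  imports Complex_Main
begin

text \<open>Unital C*-algebras (abstractly): a complex Banach algebra with unit, an involution
  and the C*-identity.  Complex scalar multiplication is the operation cscale.\<close>

class cstar_algebra = real_normed_algebra_1 + complete_space +
  fixes cscale :: "complex \<Rightarrow> 'a \<Rightarrow> 'a"
    and adj :: "'a \<Rightarrow> 'a"
  assumes cscale_of_real: "cscale (complex_of_real r) x = scaleR r x"
    and cscale_add_left: "cscale (a + b) x = cscale a x + cscale b x"
    and cscale_add_right: "cscale a (x + y) = cscale a x + cscale a y"
    and cscale_cscale: "cscale a (cscale b x) = cscale (a * b) x"
    and cscale_mult_left: "cscale a (x * y) = cscale a x * y"
    and cscale_mult_right: "cscale a (x * y) = x * cscale a y"
    and norm_cscale: "norm (cscale a x) = cmod a * norm x"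
    and adj_adj: "adj (adj x) = x"
    and adj_add: "adj (x + y) = adj x + adj y"
    and adj_mult: "adj (x * y) = adj y * adj x"
    and adj_cscale: "adj (cscale a x) = cscale (cnj a) (adj x)"
    and cstar_identity: "norm (adj x * x) = (norm x)\<^sup>2"

definition precolored :: "'a set \<Rightarrow> ('a \<times> 'a) set list \<Rightarrow> bool" where
  "precolored V E \<longleftrightarrow> finite V \<and>
     (\<forall>i < length E. E ! i \<subseteq> V \<times> V - Id_on V) \<and>
     (\<forall>i < length E. \<forall>j < length E. i \<noteq> j \<longrightarrow> E ! i \<inter> E ! j = {})"

definition completion :: "'a set \<Rightarrow> ('a \<times> 'a) set list \<Rightarrow> ('a \<times> 'a) set list" where
  "completion V E = E @ [(V \<times> V - Id_on V) - \<Union> (set E)]"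

definition pc_connected :: "'a set \<Rightarrow> ('a \<times> 'a) set list \<Rightarrow> bool" where
  "pc_connected V E \<longleftrightarrow>
     (let U = \<Union> (set E) in \<forall>x\<in>V. \<forall>y\<in>V. (x, y) \<in> (U \<union> U\<inverse>)\<^sup>*)"

definition free_prod_edges ::
  "('a \<times> 'a) set list \<Rightarrow> 'b set \<Rightarrow> 'a set \<Rightarrow> ('b \<times> 'b) set list
     \<Rightarrow> (('a \<times> 'b) \<times> ('a \<times> 'b)) set list" where
  "free_prod_edges E Z T F =
     map (\<lambda>Er. {((i, \<alpha>), (j, \<alpha>)) | i j \<alpha>. (i, j) \<in> Er \<and> \<alpha> \<in> Z}) E @
     map (\<lambda>Fs. {((i, \<alpha>), (j, \<beta>)) | i j \<alpha> \<beta>. i \<in> T \<and> j \<in> T \<and> (\<alpha>, \<beta>) \<in> Fs}) F"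

definition laplacian :: "('a \<times> 'a) set list \<Rightarrow> (nat \<Rightarrow> complex) \<Rightarrow> 'a \<Rightarrow> 'a \<Rightarrow> complex" where
  "laplacian C c x y =
     (if x = y then 0 else c (THE k. k < length C \<and> (x, y) \<in> C ! k))"

definition magic_biunitary :: "'v set \<Rightarrow> ('v \<Rightarrow> 'v \<Rightarrow> 'b::cstar_algebra) \<Rightarrow> bool" where
  "magic_biunitary V w \<longleftrightarrow>
     (\<forall>x\<in>V. \<forall>y\<in>V. adj (w x y) = w x y \<and> w x y * w x y = w x y) \<and>
     (\<forall>x\<in>V. (\<Sum>y\<in>V. w x y) = 1) \<and>
     (\<forall>y\<in>V. (\<Sum>x\<in>V. w x y) = 1)"

text \<open>The relation w d = d w, entrywise.\<close>

definition commutes_lap :: "'v set \<Rightarrow> ('v \<Rightarrow> 'v \<Rightarrow> 'b::cstar_algebra)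
     \<Rightarrow> ('v \<Rightarrow> 'v \<Rightarrow> complex) \<Rightarrow> bool" where
  "commutes_lap V w d \<longleftrightarrow>
     (\<forall>x\<in>V. \<forall>z\<in>V. (\<Sum>y\<in>V. cscale (d y z) (w x y)) = (\<Sum>y\<in>V. cscale (d x y) (w y z)))"

end

theory Submission
  imports Defs
begin


lemma cscale_one [simp]: "cscale 1 (x::'a::cstar_algebra) = x"
  using cscale_of_real[of 1 x] by simp

lemma cscale_zero_right [simp]: "cscale a (0::'a::cstar_algebra) = 0"
  using cscale_add_right[of a 0 0] by simp

lemma cscale_zero_left [simp]: "cscale 0 (x::'a::cstar_algebra) = 0"
  using cscale_of_real[of 0 x] by simp

lemma cscale_minus_left: "cscale (- a) (x::'a::cstar_algebra) = - cscale a x"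
  using cscale_add_left[of a "-a" x] by (simp add: eq_neg_iff_add_eq_0 add.commute)

lemma cscale_minus_right: "cscale a (- x::'a::cstar_algebra) = - cscale a x"
  using cscale_add_right[of a x "-x"] by (simp add: eq_neg_iff_add_eq_0 add.commute)

lemma cscale_diff_left: "cscale (a - b) (x::'a::cstar_algebra) = cscale a x - cscale b x"
  using cscale_add_left[of a "-b" x] by (simp add: cscale_minus_left)

lemma cscale_diff_right: "cscale a (x - y::'a::cstar_algebra) = cscale a x - cscale a y"
  using cscale_add_right[of a x "-y"] by (simp add: cscale_minus_right)

lemma cscale_sum_right: "cscale a (sum f S::'a::cstar_algebra) = (\<Sum>s\<in>S. cscale a (f s))"
  by (induction S rule: infinite_finite_induct) (auto simp: cscale_add_right)

lemma cscale_sum_left: "cscale (sum f S) (x::'a::cstar_algebra) = (\<Sum>s\<in>S. cscale (f s) x)"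
  by (induction S rule: infinite_finite_induct) (auto simp: cscale_add_left)

lemma cscale_real: "cscale (complex_of_real r) (x::'a::cstar_algebra) = r *\<^sub>R x"
  by (rule cscale_of_real)

lemma cscale_of_nat: "cscale (of_nat n) (x::'a::cstar_algebra) = of_nat n * x"
  using cscale_of_real[of "real n" x] by (simp add: scaleR_conv_of_real)

lemma cscale_mult_both: "cscale a (x::'a::cstar_algebra) * cscale b y = cscale (a*b) (x*y)"
  by (simp add: cscale_mult_left[symmetric] cscale_mult_right[symmetric] cscale_cscale mult.commute)

lemma cscale_power: "(cscale a (x::'a::cstar_algebra)) ^ n = cscale (a ^ n) (x ^ n)"
  by (induction n) (auto simp: cscale_mult_both)

lemma adj_zero [simp]: "adj (0::'a::cstar_algebra) = 0"
  using adj_add[of "0::'a" 0] by simp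

lemma adj_minus: "adj (- x::'a::cstar_algebra) = - adj x"
  using adj_add[of x "-x"] by (simp add: eq_neg_iff_add_eq_0 add.commute)

lemma adj_diff: "adj (x - y::'a::cstar_algebra) = adj x - adj y"
  using adj_add[of x "-y"] by (simp add: adj_minus)

lemma adj_one [simp]: "adj (1::'a::cstar_algebra) = 1"
  using adj_mult[of "adj (1::'a)" 1] by (simp add: adj_adj)

lemma adj_sum: "adj (sum f S::'a::cstar_algebra) = (\<Sum>s\<in>S. adj (f s))"
  by (induction S rule: infinite_finite_induct) (auto simp: adj_add)

lemma adj_scaleR: "adj (r *\<^sub>R x::'a::cstar_algebra) = r *\<^sub>R adj x"
  using adj_cscale[of "complex_of_real r" x] by (simp add: cscale_of_real)

lemma norm_adj_le: "norm (x::'a::cstar_algebra) \<le> norm (adj x)"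
proof -
  have "(norm x)^2 \<le> norm (adj x) * norm x"
    using cstar_identity[of x] norm_mult_ineq[of "adj x" x] by simp
  then show ?thesis
    by (cases "norm x = 0") (auto simp: power2_eq_square)
qed

lemma norm_adj [simp]: "norm (adj (x::'a::cstar_algebra)) = norm x"
  using norm_adj_le[of x] norm_adj_le[of "adj x"] by (simp add: adj_adj)

definition proj :: "'a::cstar_algebra \<Rightarrow> bool" where
  "proj p \<longleftrightarrow> adj p = p \<and> p * p = p"

lemma norm_proj_le: assumes "proj p" shows "norm p \<le> 1"
proof -
  have "(norm p)^2 = norm p" using cstar_identity[of p] assms by (simp add: proj_def)
  then show ?thesis by (cases "norm p = 0") (auto simp: power2_eq_square)
qed

lemma proj_compl: "proj p \<Longrightarrow> proj (1 - p)"
  by (simp add: proj_def adj_diff algebra_simps)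



lemma binom1: fixes y :: "'a::ring_1"
  shows "(1 + y)^n = (\<Sum>k\<le>n. of_nat (n choose k) * y^k)"
proof (induction n)
  case 0 then show ?case by simp
next
  case (Suc n)
  have "(1 + y)^Suc n = (1+y)^n + (1+y)^n * y" by (simp only: power_Suc2 distrib_left mult_1_right)
  also have "(1+y)^n * y = (\<Sum>k\<le>n. of_nat (n choose k) * y^Suc k)"
    by (simp add: Suc sum_distrib_right mult.assoc power_commutes)
  also have "(1+y)^n = 1 + (\<Sum>k<n. of_nat (n choose Suc k) * y^Suc k)"
    by (simp add: Suc sum.atMost_shift)
  also have "(\<Sum>k\<le>n. of_nat (n choose k) * y^Suc k) = (\<Sum>k<n. of_nat (n choose k) * y^Suc k) + y^Suc n"
    by (simp add: lessThan_Suc_atMost[symmetric])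
  finally have 1: "(1 + y)^Suc n = 1 + (\<Sum>k<n. of_nat (n choose Suc k) * y^Suc k + of_nat (n choose k) * y^Suc k) + y^Suc n"
    by (simp add: sum.distrib algebra_simps)
  have "(\<Sum>k\<le>Suc n. of_nat (Suc n choose k) * y^k) = 1 + (\<Sum>k\<le>n. of_nat (Suc n choose Suc k) * y^Suc k)"
    by (subst sum.atMost_Suc_shift) (simp del: binomial_Suc_Suc)
  also have "(\<Sum>k\<le>n. of_nat (Suc n choose Suc k) * y^Suc k) = (\<Sum>k<n. of_nat (Suc n choose Suc k) * y^Suc k) + y^Suc n"
    by (simp add: lessThan_Suc_atMost[symmetric] del: binomial_Suc_Suc)
  finally show ?case using 1 by (simp add: algebra_simps)
qed

lemma e_power: fixes e y :: "'a::ring_1"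
  assumes "e*e = e" "e*y = y" "y*e = y" "n \<ge> 1"
  shows "e * (1 + y)^n = (e + y)^n"
  using assms(4)
proof (induction n rule: dec_induct)
  case base then show ?case using assms by (simp add: algebra_simps)
next
  case (step n)
  have ee: "(e+y)^n * e = (e+y)^n"
  proof -
    obtain m where m: "n = Suc m" using step(1) by (cases n) auto
    have "(e+y)^n * e = (e+y)^m * ((e+y) * e)" by (simp only: m power_Suc2 mult.assoc)
    also have "(e+y)*e = e+y" using assms by (simp add: algebra_simps)
    finally show ?thesis by (metis m power_Suc2)
  qed
  have "e * (1+y)^Suc n = (e * (1+y)^n) * (1+y)" by (simp only: power_Suc2 mult.assoc)
  also have "\<dots> = (e+y)^n * (1+y)" using step by simp
  also have "\<dots> = (e+y)^n * (e * (1 + y))" using ee by (metis mult.assoc)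
  also have "e * (1+y) = e + y" using assms by (simp add: algebra_simps)
  finally show ?case by (simp only: power_Suc2)
qed

definition omg :: "nat \<Rightarrow> complex" where "omg N = cis (2 * pi / real N)"

lemma omg_pow: "omg N ^ m = cis (2 * pi * real m / real N)"
  by (simp add: omg_def DeMoivre mult_ac)

lemma omg_N: "N > 0 \<Longrightarrow> omg N ^ N = 1"
  using omg_pow[of N N] by (simp add: complex_eq_iff)

lemma omg_ne1: assumes "0 < m" "m < N" shows "omg N ^ m \<noteq> 1"
proof
  assume a: "omg N ^ m = 1"
  have N: "N > 0" using assms by simp
  have "inj_on (\<lambda>k. cis (2 * pi * real k / real N)) {..<N}"
    using bij_betw_roots_unity[OF N] by (simp add: bij_betw_def)
  moreover have "cis (2 * pi * real m / real N) = cis (2 * pi * real 0 / real N)"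
    using a by (simp add: omg_pow)
  ultimately have "m = 0" using assms by (auto simp: inj_on_def)
  then show False using assms by simp
qed

lemma omg_sum: assumes "omg N ^ m \<noteq> 1"
  shows "(\<Sum>j<N. (omg N ^ m)^j) = 0"
proof -
  have "(\<Sum>j<N. (omg N ^ m)^j) = ((omg N ^ m)^N - 1) / (omg N ^ m - 1)"
    using assms by (simp add: geometric_sum)
  also have "(omg N ^ m)^N = 1"
  proof (cases "N = 0")
    case False then show ?thesis
      by (metis mult.commute omg_N power_mult power_one bot_nat_0.not_eq_extremum)
  qed simp
  finally show ?thesis by simp
qed

lemma omg_coef: assumes "2 \<le> N" "k < N"
  shows "(\<Sum>j<N. omg N ^ ((N - 1) * j) * (omg N ^ j)^k) = (if k = 1 then of_nat N else 0)"
proof -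
  have eq: "(\<Sum>j<N. omg N ^ ((N - 1) * j) * (omg N ^ j)^k) = (\<Sum>j<N. (omg N ^ (N - 1 + k))^j)"
    by (intro sum.cong refl) (simp add: power_mult[symmetric] power_add[symmetric] algebra_simps)
  show ?thesis
  proof (cases "k = 1")
    case True
    then have "N - 1 + k = N" using assms by simp
    then show ?thesis using eq True omg_N[of N] assms by simp
  next
    case False
    show ?thesis
    proof (cases "k = 0")
      case True
      have "omg N ^ (N - 1 + k) \<noteq> 1" using True assms by (intro omg_ne1) auto
      then have "(\<Sum>j<N. (omg N ^ (N - 1 + k))^j) = 0" by (rule omg_sum)
      then show ?thesis using eq False by simp
    next
      case k0: False
      have "omg N ^ (N - 1 + k) = omg N ^ N * omg N ^ (k - 1)"
        using k0 False assms by (simp add: power_add[symmetric])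
      also have "\<dots> = omg N ^ (k - 1)" using omg_N[of N] assms by simp
      also have "\<dots> \<noteq> 1" using k0 False assms by (intro omg_ne1) auto
      finally have "(\<Sum>j<N. (omg N ^ (N - 1 + k))^j) = 0" by (rule omg_sum)
      then show ?thesis using eq False by simp
    qed
  qed
qed



lemma cscale_binom: fixes h :: "'a::cstar_algebra"
  shows "(1 + cscale c h)^n = (\<Sum>k\<le>n. cscale (of_nat (n choose k) * c^k) (h^k))"
  unfolding binom1
  by (intro sum.cong refl) (simp add: cscale_power cscale_of_nat[symmetric] cscale_cscale)

lemma fourier: fixes h :: "'a::cstar_algebra"
  assumes "2 \<le> N" "n < N" "1 \<le> n"
  shows "(\<Sum>j<N. cscale (omg N ^ ((N-1)*j)) ((1 + cscale (complex_of_real r * omg N ^ j) h)^n))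
         = cscale (of_nat N * of_nat n * complex_of_real r) h"
proof -
  have "(\<Sum>j<N. cscale (omg N ^ ((N-1)*j)) ((1 + cscale (complex_of_real r * omg N ^ j) h)^n))
      = (\<Sum>j<N. \<Sum>k\<le>n. cscale (omg N ^ ((N-1)*j) * (of_nat (n choose k) * (complex_of_real r * omg N ^ j)^k)) (h^k))"
    by (simp add: cscale_binom cscale_sum_right cscale_cscale)
  also have "\<dots> = (\<Sum>k\<le>n. \<Sum>j<N. cscale (omg N ^ ((N-1)*j) * (of_nat (n choose k) * (complex_of_real r * omg N ^ j)^k)) (h^k))"
    by (rule sum.swap)
  also have "\<dots> = (\<Sum>k\<le>n. cscale (of_nat (n choose k) * complex_of_real r ^ k * (\<Sum>j<N. omg N ^ ((N-1)*j) * (omg N ^ j)^k)) (h^k))"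
    by (intro sum.cong refl) (simp add: cscale_sum_left[symmetric] sum_distrib_left power_mult_distrib mult_ac)
  also have "\<dots> = (\<Sum>k\<le>n. if k = 1 then cscale (of_nat N * of_nat n * complex_of_real r) h else 0)"
  proof (intro sum.cong refl)
    fix k assume "k \<in> {..n}"
    then have "k < N" using assms by simp
    then show "cscale (of_nat (n choose k) * complex_of_real r ^ k * (\<Sum>j<N. omg N ^ ((N-1)*j) * (omg N ^ j)^k)) (h^k)
        = (if k = 1 then cscale (of_nat N * of_nat n * complex_of_real r) h else 0)"
      using omg_coef[OF assms(1)] by (simp add: mult_ac)
  qed
  also have "\<dots> = cscale (of_nat N * of_nat n * complex_of_real r) h"
    using assms by (simp add: sum.delta)
  finally show ?thesis .
qed

lemma conv_ball: fixes e u :: "'a::cstar_algebra"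
  assumes "norm e \<le> 1" "norm (e + u) \<le> 1" "norm (e - u) \<le> 1" "\<bar>s\<bar> \<le> 1"
  shows "norm (e + s *\<^sub>R u) \<le> 1"
proof (cases "s \<ge> 0")
  case True
  have "e + s *\<^sub>R u = (1 - s) *\<^sub>R e + s *\<^sub>R (e + u)" by (simp add: algebra_simps)
  also have "norm \<dots> \<le> (1 - s) * norm e + s * norm (e + u)"
    using True assms(4) by (intro order.trans[OF norm_triangle_ineq]) simp
  also have "\<dots> \<le> (1 - s) * 1 + s * 1"
    using True assms by (intro add_mono mult_left_mono) auto
  finally show ?thesis by simp
next
  case False
  have "e + s *\<^sub>R u = (1 + s) *\<^sub>R e + (- s) *\<^sub>R (e - u)" by (simp add: algebra_simps)
  also have "norm \<dots> \<le> (1 + s) * norm e + (-s) * norm (e - u)"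
    using False assms(4) by (intro order.trans[OF norm_triangle_ineq]) simp
  also have "\<dots> \<le> (1 + s) * 1 + (-s) * 1"
    using False assms by (intro add_mono mult_left_mono) auto
  finally show ?thesis by simp
qed

lemma norm_sq_le1: "norm (x::'a::cstar_algebra) \<le> 1 \<Longrightarrow> norm (x * x) \<le> 1"
  by (metis mult_le_one norm_ge_zero norm_mult_ineq order_trans)

lemma crux: fixes e h :: "'a::cstar_algebra"
  assumes pe: "proj e" and ah: "adj h = h" and eh: "e * h = h" and he: "h * e = h"
    and n1: "norm (e + h) \<le> 1" and n2: "norm (e - h) \<le> 1"
  shows "h = 0"
proof -
  have ee: "e * e = e" and ae: "adj e = e" using pe by (auto simp: proj_def)
  have ne: "norm e \<le> 1" using norm_proj_le[OF pe] .
  have "e + h * h = (1/2) *\<^sub>R ((e + h) * (e + h) + (e - h) * (e - h))"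
    by (simp add: algebra_simps ee eh he scaleR_2[symmetric] del: scaleR_2)
  also have "norm \<dots> \<le> (1/2) * (1 + 1)"
    using norm_sq_le1[OF n1] norm_sq_le1[OF n2]
    by (simp add: order.trans[OF norm_triangle_ineq])
  finally have nhh: "norm (e + h * h) \<le> 1" by simp
  define k where "k = cscale \<i> h"
  have ak: "adj k = - k" unfolding k_def
    by (simp add: adj_cscale ah cscale_minus_left)
  have kk: "k * k = - (h * h)" unfolding k_def
    by (simp add: cscale_mult_both cscale_minus_left)
  have ek: "e * k = k" and ke: "k * e = k" unfolding k_def
    by (simp_all add: cscale_mult_right[symmetric] cscale_mult_left[symmetric] eh he)
  have "(norm (e + k))^2 = norm (adj (e + k) * (e + k))" by (simp add: cstar_identity)
  also have "adj (e + k) * (e + k) = e + h * h"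
    by (simp add: adj_add ae ak algebra_simps ee ek ke kk)
  finally have "(norm (e + k))^2 \<le> 1" using nhh by simp
  then have nk1: "norm (e + k) \<le> 1" by (simp add: power_le_one_iff)
  have "(norm (e - k))^2 = norm (adj (e - k) * (e - k))" by (simp add: cstar_identity)
  also have "adj (e - k) * (e - k) = e + h * h"
    by (simp add: adj_diff ae ak algebra_simps ee ek ke kk)
  finally have "(norm (e - k))^2 \<le> 1" using nhh by simp
  then have nk2: "norm (e - k) \<le> 1" by (simp add: power_le_one_iff)
  have disc: "norm (e + cscale z h) \<le> 1" if z: "norm z \<le> 1/2" for z
  proof -
    have "z = complex_of_real (Re z) + complex_of_real (Im z) * \<i>"
      by (simp add: complex_eq_iff)
    then have "cscale z h = Re z *\<^sub>R h + Im z *\<^sub>R k"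
      unfolding k_def by (metis cscale_add_left cscale_cscale cscale_of_real)
    then have "e + cscale z h = (1/2) *\<^sub>R (e + (2 * Re z) *\<^sub>R h) + (1/2) *\<^sub>R (e + (2 * Im z) *\<^sub>R k)"
      by (simp add: algebra_simps scaleR_2[symmetric] del: scaleR_2)
    also have "norm \<dots> \<le> (1/2) * norm (e + (2 * Re z) *\<^sub>R h) + (1/2) * norm (e + (2 * Im z) *\<^sub>R k)"
      by (rule order.trans[OF norm_triangle_ineq]) simp
    also have "\<dots> \<le> (1/2) * 1 + (1/2) * 1"
    proof -
      have "\<bar>Re z\<bar> \<le> 1/2" using abs_Re_le_cmod[of z] z by simp
      then have a: "norm (e + (2 * Re z) *\<^sub>R h) \<le> 1" by (intro conv_ball[OF ne n1 n2]) simp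
      have "\<bar>Im z\<bar> \<le> 1/2" using abs_Im_le_cmod[of z] z by simp
      then have b: "norm (e + (2 * Im z) *\<^sub>R k) \<le> 1" by (intro conv_ball[OF ne nk1 nk2]) simp
      show ?thesis using a b by simp
    qed
    finally show ?thesis by simp
  qed
  have bound: "real n * norm h \<le> 2" if n: "n \<ge> 1" for n
  proof -
    define N where "N = Suc n"
    have N2: "2 \<le> N" "n < N" using n by (auto simp: N_def)
    let ?X = "\<lambda>j. cscale (omg N ^ ((N-1)*j)) (e * (1 + cscale (complex_of_real (1/2) * omg N ^ j) h)^n)"
    have "(\<Sum>j<N. ?X j) = e * (\<Sum>j<N. cscale (omg N ^ ((N-1)*j)) ((1 + cscale (complex_of_real (1/2) * omg N ^ j) h)^n))"
      by (simp add: sum_distrib_left cscale_mult_right)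
    also have "\<dots> = cscale (of_nat N * of_nat n * complex_of_real (1/2)) h"
      by (subst fourier[OF N2 n]) (simp add: cscale_mult_right[symmetric] eh)
    finally have eq: "(\<Sum>j<N. ?X j) = cscale (of_nat N * of_nat n * complex_of_real (1/2)) h" .
    have "norm (?X j) \<le> 1" for j
    proof -
      have nw: "\<And>m. cmod (omg N ^ m) = 1" by (simp add: omg_def norm_power)
      have "e * (1 + cscale (complex_of_real (1/2) * omg N ^ j) h)^n = (e + cscale (complex_of_real (1/2) * omg N ^ j) h)^n"
        using n by (intro e_power) (simp_all add: ee cscale_mult_right[symmetric] cscale_mult_left[symmetric] eh he)
      also have "norm \<dots> \<le> (norm (e + cscale (complex_of_real (1/2) * omg N ^ j) h))^n"
        by (rule norm_power_ineq)
      also have "\<dots> \<le> 1"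
        by (intro power_le_one norm_ge_zero disc) (simp add: norm_mult norm_power omg_def)
      finally show ?thesis by (simp add: norm_cscale nw)
    qed
    then have "norm (\<Sum>j<N. ?X j) \<le> real N"
      using norm_sum[of ?X "{..<N}"] sum_mono[of "{..<N}" "\<lambda>j. norm (?X j)" "\<lambda>_. 1"] by simp
    then have "real N * real n * (1/2) * norm h \<le> real N"
      unfolding eq by (simp add: norm_cscale norm_mult)
    then show ?thesis using N2 by (simp add: field_simps)
  qed
  show "h = 0"
  proof (rule ccontr)
    assume "h \<noteq> 0"
    then have p: "norm h > 0" by simp
    define n where "n = nat (ceiling (3 / norm h)) + 1"
    have "3 / norm h \<le> real n" unfolding n_def by linarith
    then have "3 \<le> real n * norm h" using p by (simp add: field_simps)
    moreover have "real n * norm h \<le> 2" by (rule bound) (simp add: n_def)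
    ultimately show False by simp
  qed
qed



lemma norm_xpx: assumes "proj x" "proj q" shows "norm (x * q * x) \<le> 1"
  using norm_proj_le[OF assms(1)] norm_proj_le[OF assms(2)]
  by (metis mult_le_one norm_ge_zero norm_mult_ineq order_trans)

lemma orth: fixes P :: "'v \<Rightarrow> 'a::cstar_algebra"
  assumes fin: "finite V" and pr: "\<forall>y\<in>V. proj (P y)" and s1: "(\<Sum>y\<in>V. P y) = 1"
    and a: "a \<in> V" and b: "b \<in> V" and ab: "a \<noteq> b"
  shows "P a * P b = 0"
proof -
  define x where "x = P a"
  have px: "proj x" using pr a by (simp add: x_def)
  have xx: "x * x = x" and ax: "adj x = x" using px by (auto simp: proj_def)
  define h where "h c = x * P c * x" for c
  have "(\<Sum>c\<in>V. h c) = x * (\<Sum>c\<in>V. P c) * x" by (simp add: h_def sum_distrib_left sum_distrib_right)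
  also have "\<dots> = x" using s1 xx by simp
  finally have "h a + (\<Sum>c\<in>V-{a}. h c) = x" using sum.remove[OF fin a, of h] by simp
  moreover have "h a = x" using xx by (simp add: h_def x_def[symmetric])
  ultimately have s0: "(\<Sum>c\<in>V-{a}. h c) = 0" by simp
  define W where "W = V - {a} - {b}"
  have bV: "b \<in> V - {a}" using b ab by simp
  have "h b + (\<Sum>c\<in>W. h c) = 0" using sum.remove[OF _ bV, of h] fin s0 by (simp add: W_def)
  then have sW: "(\<Sum>c\<in>W. h c) = - h b" by (simp add: eq_neg_iff_add_eq_0 add.commute)
  define K where "K = card W"
  define t where "t = 1 / (real K + 1)"
  have t0: "0 < t" "t \<le> 1" by (auto simp: t_def)
  define h' where "h' = t *\<^sub>R h b"
  have ph: "proj (P c)" if "c \<in> V" for c using pr that by simp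
  have ah: "adj (h c) = h c" if "c \<in> V" for c
    using ph[OF that] ax by (simp add: h_def adj_mult proj_def mult.assoc)
  have nh: "norm (x - h c) \<le> 1" if "c \<in> V" for c
  proof -
    have "x - h c = x * (1 - P c) * x" by (simp add: h_def algebra_simps xx)
    then show ?thesis using norm_xpx[OF px proj_compl[OF ph[OF that]]] by simp
  qed
  have "h' = 0"
  proof (rule crux[OF px])
    show "adj h' = h'" using ah[OF b] by (simp add: h'_def adj_scaleR)
    show "x * h' = h'" by (simp add: h'_def h_def mult.assoc[symmetric] xx)
    show "h' * x = h'" by (simp add: h'_def h_def mult.assoc xx)
    have "x - h' = (1 - t) *\<^sub>R x + t *\<^sub>R (x - h b)" by (simp add: h'_def algebra_simps)
    also have "norm \<dots> \<le> (1 - t) * norm x + t * norm (x - h b)"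
      using t0 by (intro order.trans[OF norm_triangle_ineq]) simp
    also have "\<dots> \<le> (1 - t) * 1 + t * 1"
      using t0 norm_proj_le[OF px] nh[OF b] by (intro add_mono mult_left_mono) auto
    finally show "norm (x - h') \<le> 1" by simp
    have ssum: "(\<Sum>c\<in>W. (x - h c)) = real K *\<^sub>R x + h b"
      by (simp add: sum_subtractf sW K_def scaleR_conv_of_real)
    have tk: "t * (real K + 1) = 1" by (simp add: t_def)
    have "t *\<^sub>R (x + (\<Sum>c\<in>W. (x - h c))) = (t * (real K + 1)) *\<^sub>R x + t *\<^sub>R h b"
      unfolding ssum by (simp add: algebra_simps)
    then have "x + h' = t *\<^sub>R (x + (\<Sum>c\<in>W. (x - h c)))"
      using tk by (simp add: h'_def)
    also have "norm \<dots> \<le> t * (norm x + (\<Sum>c\<in>W. norm (x - h c)))"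
      using t0 by (simp add: order.trans[OF norm_triangle_ineq] norm_sum add_left_mono)
    also have "\<dots> \<le> t * (1 + (\<Sum>c\<in>W. 1))"
      using t0 norm_proj_le[OF px] nh by (intro mult_left_mono add_mono sum_mono) (auto simp: W_def)
    also have "\<dots> = 1" by (simp add: t_def K_def)
    finally show "norm (x + h') \<le> 1" .
  qed
  then have hb0: "h b = 0" using t0 by (simp add: h'_def)
  have "(norm (P b * x))^2 = norm (adj (P b * x) * (P b * x))" by (simp add: cstar_identity)
  also have "adj (P b * x) * (P b * x) = h b"
  proof -
    have pp: "P b * P b = P b" and ap: "adj (P b) = P b" using ph[OF b] by (auto simp: proj_def)
    have "adj (P b * x) * (P b * x) = x * (P b * P b) * x" using ap ax by (simp add: adj_mult mult.assoc)
    then show ?thesis using pp by (simp add: h_def)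
  qed
  finally have "P b * x = 0" using hb0 by simp
  then have "adj (P b * x) = 0" by simp
  then show ?thesis using ph[OF b] ax by (simp add: adj_mult proj_def x_def)
qed



definition PR :: "'v set \<Rightarrow> ('v \<Rightarrow> 'v \<Rightarrow> 'a::cstar_algebra) \<Rightarrow> ('v \<times> 'v) set \<Rightarrow> bool" where
  "PR V w R \<longleftrightarrow> (\<forall>x\<in>V. \<forall>a\<in>V. \<forall>b\<in>V. \<forall>z\<in>V. ((a,z)\<in>R) \<noteq> ((x,b)\<in>R) \<longrightarrow> w x a * w b z = 0)"

definition Qd :: "'v set \<Rightarrow> ('v \<Rightarrow> 'v \<Rightarrow> 'a::cstar_algebra) \<Rightarrow> ('v \<Rightarrow> 'v \<Rightarrow> complex) \<Rightarrow> bool" where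
  "Qd V w d \<longleftrightarrow> (\<forall>x\<in>V. \<forall>a\<in>V. \<forall>b\<in>V. \<forall>z\<in>V. d a z \<noteq> d x b \<longrightarrow> w x a * w b z = 0)"

locale magic =
  fixes V :: "'v set" and w :: "'v \<Rightarrow> 'v \<Rightarrow> 'a::cstar_algebra"
  assumes fin: "finite V" and mb: "magic_biunitary V w"
begin

lemma pw: "x \<in> V \<Longrightarrow> y \<in> V \<Longrightarrow> proj (w x y)"
  using mb by (simp add: magic_biunitary_def proj_def)

lemma rowsum: "x \<in> V \<Longrightarrow> (\<Sum>y\<in>V. w x y) = 1"
  using mb by (simp add: magic_biunitary_def)

lemma colsum: "y \<in> V \<Longrightarrow> (\<Sum>x\<in>V. w x y) = 1"
  using mb by (simp add: magic_biunitary_def)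

lemma row_orth: "x \<in> V \<Longrightarrow> a \<in> V \<Longrightarrow> z \<in> V \<Longrightarrow> a \<noteq> z \<Longrightarrow> w x a * w x z = 0"
  using orth[OF fin, of "w x" a z] pw rowsum by auto

lemma col_orth: "x \<in> V \<Longrightarrow> a \<in> V \<Longrightarrow> b \<in> V \<Longrightarrow> x \<noteq> b \<Longrightarrow> w x a * w b a = 0"
  using orth[OF fin, of "\<lambda>y. w y a" x b] pw colsum by auto

lemma row_delta: "x \<in> V \<Longrightarrow> a \<in> V \<Longrightarrow> y \<in> V \<Longrightarrow> w x a * w x y = (if y = a then w x a else 0)"
  using row_orth pw by (auto simp: proj_def)

lemma col_delta: "y \<in> V \<Longrightarrow> b \<in> V \<Longrightarrow> z \<in> V \<Longrightarrow> w y z * w b z = (if y = b then w b z else 0)"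
  using col_orth pw by (auto simp: proj_def)

lemma PR_Id: "PR V w Id"
  unfolding PR_def using row_orth col_orth by auto

lemma commutes_Qd: "commutes_lap V w d \<longleftrightarrow> Qd V w d"
proof
  assume c: "commutes_lap V w d"
  show "Qd V w d" unfolding Qd_def
  proof (intro ballI impI)
    fix x a b z assume V: "x \<in> V" "a \<in> V" "b \<in> V" "z \<in> V" and ne: "d a z \<noteq> d x b"
    have eq: "(\<Sum>y\<in>V. cscale (d y z) (w x y)) = (\<Sum>y\<in>V. cscale (d x y) (w y z))"
      using c V by (simp add: commutes_lap_def)
    have "w x a * (\<Sum>y\<in>V. cscale (d y z) (w x y)) = (\<Sum>y\<in>V. if y = a then cscale (d a z) (w x a) else 0)"
      using V by (auto simp: sum_distrib_left cscale_mult_right[symmetric] row_delta intro!: sum.cong)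
    also have "\<dots> = cscale (d a z) (w x a)" using V fin by (simp add: sum.delta)
    finally have 1: "w x a * (\<Sum>y\<in>V. cscale (d y z) (w x y)) * w b z = cscale (d a z) (w x a * w b z)"
      by (simp add: cscale_mult_left)
    have "(\<Sum>y\<in>V. cscale (d x y) (w y z)) * w b z = (\<Sum>y\<in>V. if y = b then cscale (d x b) (w b z) else 0)"
      using V by (auto simp: sum_distrib_right cscale_mult_left[symmetric] col_delta intro!: sum.cong)
    also have "\<dots> = cscale (d x b) (w b z)" using V fin by (simp add: sum.delta')
    finally have 2: "w x a * ((\<Sum>y\<in>V. cscale (d x y) (w y z)) * w b z) = cscale (d x b) (w x a * w b z)"
      by (simp add: cscale_mult_right)
    have "cscale (d a z) (w x a * w b z) = cscale (d x b) (w x a * w b z)"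
      using 1 2 eq by (simp add: mult.assoc)
    then have "cscale (d a z - d x b) (w x a * w b z) = 0" by (simp add: cscale_diff_left)
    then have "cscale (1 / (d a z - d x b)) (cscale (d a z - d x b) (w x a * w b z)) = 0" by simp
    then show "w x a * w b z = 0" using ne by (simp add: cscale_cscale)
  qed
next
  assume q: "Qd V w d"
  show "commutes_lap V w d" unfolding commutes_lap_def
  proof (intro ballI)
    fix x z assume V: "x \<in> V" "z \<in> V"
    have "(\<Sum>y\<in>V. cscale (d y z) (w x y)) = (\<Sum>y\<in>V. cscale (d y z) (w x y * (\<Sum>b\<in>V. w b z)))"
      using colsum V by simp
    also have "\<dots> = (\<Sum>y\<in>V. \<Sum>b\<in>V. cscale (d y z) (w x y * w b z))"
      by (simp add: sum_distrib_left cscale_sum_right)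
    also have "\<dots> = (\<Sum>y\<in>V. \<Sum>b\<in>V. cscale (d x b) (w x y * w b z))"
    proof (intro sum.cong refl)
      fix y b assume "y \<in> V" "b \<in> V"
      then show "cscale (d y z) (w x y * w b z) = cscale (d x b) (w x y * w b z)"
        using q V unfolding Qd_def by (cases "d y z = d x b") auto
    qed
    also have "\<dots> = (\<Sum>b\<in>V. \<Sum>y\<in>V. cscale (d x b) (w x y * w b z))" by (rule sum.swap)
    also have "\<dots> = (\<Sum>b\<in>V. cscale (d x b) ((\<Sum>y\<in>V. w x y) * w b z))"
      by (simp add: sum_distrib_right cscale_sum_right)
    also have "\<dots> = (\<Sum>b\<in>V. cscale (d x b) (w b z))" using rowsum V by simp
    finally show "(\<Sum>y\<in>V. cscale (d y z) (w x y)) = (\<Sum>y\<in>V. cscale (d x y) (w y z))" .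
  qed
qed

lemma PR_cong: "PR V w R \<Longrightarrow> (\<And>p q. p \<in> V \<Longrightarrow> q \<in> V \<Longrightarrow> (p,q) \<in> R \<longleftrightarrow> (p,q) \<in> R') \<Longrightarrow> PR V w R'"
  unfolding PR_def by metis

lemma PR_Union: "(\<And>R. R \<in> RR \<Longrightarrow> PR V w R) \<Longrightarrow> PR V w (\<Union>RR)"
  unfolding PR_def by blast

lemma PR_Un: "PR V w R \<Longrightarrow> PR V w R' \<Longrightarrow> PR V w (R \<union> R')"
  unfolding PR_def by blast

lemma PR_Int: "PR V w R \<Longrightarrow> PR V w R' \<Longrightarrow> PR V w (R \<inter> R')"
  unfolding PR_def by blast

lemma PR_Diff: "PR V w R \<Longrightarrow> PR V w R' \<Longrightarrow> PR V w (R - R')"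
  unfolding PR_def by blast

lemma PR_converse: assumes "PR V w R" shows "PR V w (R\<inverse>)"
  unfolding PR_def
proof (intro ballI impI)
  fix x a b z assume V: "x \<in> V" "a \<in> V" "b \<in> V" "z \<in> V" and ne: "((a,z)\<in>R\<inverse>) \<noteq> ((x,b)\<in>R\<inverse>)"
  then have "w b z * w x a = 0" using assms unfolding PR_def by auto
  then have "adj (w b z * w x a) = 0" by simp
  then show "w x a * w b z = 0" using pw V by (simp add: adj_mult proj_def)
qed

lemma PR_comp: assumes p1: "PR V w R1" and p2: "PR V w R2" and sub: "R2 \<subseteq> V \<times> V"
  shows "PR V w (R1 O R2)"
  unfolding PR_def
proof (intro ballI impI)
  fix x a b z assume V: "x \<in> V" "a \<in> V" "b \<in> V" "z \<in> V" and ne: "((a,z)\<in>R1 O R2) \<noteq> ((x,b)\<in>R1 O R2)"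
  show "w x a * w b z = 0"
  proof (cases "(x,b) \<in> R1 O R2")
    case True
    then obtain y where y: "(x,y) \<in> R1" "(y,b) \<in> R2" by blast
    have yV: "y \<in> V" using y sub by auto
    have naz: "(a,z) \<notin> R1 O R2" using ne True by simp
    have "w x a * w b z = w x a * (\<Sum>c\<in>V. w y c) * w b z" using rowsum yV by simp
    also have "\<dots> = (\<Sum>c\<in>V. w x a * w y c * w b z)" by (simp add: sum_distrib_left sum_distrib_right)
    also have "\<dots> = 0"
    proof (rule sum.neutral, intro ballI)
      fix c assume cV: "c \<in> V"
      show "w x a * w y c * w b z = 0"
      proof (cases "(a,c) \<in> R1")
        case False
        then have "w x a * w y c = 0" using p1 V yV cV y unfolding PR_def by blast
        then show ?thesis by simp
      next
        case True
        then have "(c,z) \<notin> R2" using naz by blast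
        then have "w y c * w b z = 0" using p2 V yV cV y unfolding PR_def by blast
        then show ?thesis by (simp add: mult.assoc)
      qed
    qed
    finally show ?thesis .
  next
    case False
    then have "(a,z) \<in> R1 O R2" using ne by simp
    then obtain c where c: "(a,c) \<in> R1" "(c,z) \<in> R2" by blast
    have cV: "c \<in> V" using c sub by auto
    have "w x a * w b z = w x a * (\<Sum>y\<in>V. w y c) * w b z" using colsum cV by simp
    also have "\<dots> = (\<Sum>y\<in>V. w x a * w y c * w b z)" by (simp add: sum_distrib_left sum_distrib_right)
    also have "\<dots> = 0"
    proof (rule sum.neutral, intro ballI)
      fix y assume yV: "y \<in> V"
      show "w x a * w y c * w b z = 0"
      proof (cases "(x,y) \<in> R1")
        case False
        then have "w x a * w y c = 0" using p1 V yV cV c unfolding PR_def by blast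
        then show ?thesis by simp
      next
        case True
        then have "(y,b) \<notin> R2" using False by blast
        then have "w y c * w b z = 0" using p2 V yV cV c unfolding PR_def by blast
        then show ?thesis by (simp add: mult.assoc)
      qed
    qed
    finally show ?thesis .
  qed
qed

lemma PR_relpow: assumes "PR V w R" "R \<subseteq> V \<times> V" shows "PR V w (R ^^ n)"
proof (induction n)
  case 0 then show ?case by (simp add: PR_Id)
next
  case (Suc n) then show ?case using PR_comp[OF Suc assms] by simp
qed

lemma PR_rtrancl: assumes "PR V w R" "R \<subseteq> V \<times> V" shows "PR V w (R\<^sup>*)"
  unfolding rtrancl_is_UN_relpow by (rule PR_Union) (use PR_relpow[OF assms] in blast)

end



lemma lap_diag [simp]: "laplacian C c p p = 0"
  by (simp add: laplacian_def)

lemma pc_sub: "precolored V C \<Longrightarrow> k < length C \<Longrightarrow> C ! k \<subseteq> V \<times> V - Id_on V"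
  by (simp add: precolored_def)

lemma pc_disj: "precolored V C \<Longrightarrow> i < length C \<Longrightarrow> j < length C \<Longrightarrow> i \<noteq> j \<Longrightarrow> C ! i \<inter> C ! j = {}"
  by (simp add: precolored_def)

lemma lap_val: assumes "precolored V C" "k < length C" "(p,q) \<in> C ! k"
  shows "laplacian C c p q = c k"
proof -
  have "p \<noteq> q" using pc_sub[OF assms(1,2)] assms(3) by auto
  moreover have "(THE k'. k' < length C \<and> (p,q) \<in> C ! k') = k"
    using assms pc_disj[OF assms(1)] by (intro the_equality) blast+
  ultimately show ?thesis by (simp add: laplacian_def)
qed

lemma cov_ex: assumes "\<Union>(set C) = V \<times> V - Id_on V" "p \<in> V" "q \<in> V" "p \<noteq> q"
  shows "\<exists>k<length C. (p,q) \<in> C ! k"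
proof -
  have "(p,q) \<in> \<Union>(set C)" using assms by auto
  then show ?thesis by (auto simp: in_set_conv_nth)
qed

context magic begin

lemma Qd_lap: assumes pc: "precolored V C" and cov: "\<Union>(set C) = V \<times> V - Id_on V"
    and inj: "inj_on c {..<length C}"
  shows "Qd V w (laplacian C c) \<longleftrightarrow> (\<forall>X\<in>set C. PR V w X)"
proof
  assume q: "Qd V w (laplacian C c)"
  show "\<forall>X\<in>set C. PR V w X"
  proof
    fix X assume "X \<in> set C"
    then obtain k where k: "k < length C" "X = C ! k" by (auto simp: in_set_conv_nth)
    show "PR V w X" unfolding PR_def
    proof (intro ballI impI)
      fix x a b z assume V: "x \<in> V" "a \<in> V" "b \<in> V" "z \<in> V" and ne: "((a,z)\<in>X) \<noteq> ((x,b)\<in>X)"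
      have offd: "p \<noteq> q" if "(p,q) \<in> X" for p q using pc_sub[OF pc k(1)] k(2) that by auto
      show "w x a * w b z = 0"
      proof (cases "(a,z) \<in> X")
        case True
        then have nxb: "(x,b) \<notin> X" using ne by simp
        have daz: "laplacian C c a z = c k" using lap_val[OF pc k(1)] True k by simp
        show ?thesis
        proof (cases "x = b")
          case True
          then show ?thesis using PR_Id V offd[OF \<open>(a,z)\<in>X\<close>] unfolding PR_def by auto
        next
          case False
          then obtain k' where k': "k' < length C" "(x,b) \<in> C ! k'" using cov_ex[OF cov] V by blast
          have "k' \<noteq> k" using k' nxb k by auto
          then have "c k' \<noteq> c k" using inj k k' by (auto simp: inj_on_def)
          then have "laplacian C c a z \<noteq> laplacian C c x b" using lap_val[OF pc k'] daz by simp
          then show ?thesis using q V unfolding Qd_def by blast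
        qed
      next
        case False
        then have nxb: "(x,b) \<in> X" using ne by simp
        have dxb: "laplacian C c x b = c k" using lap_val[OF pc k(1)] nxb k by simp
        show ?thesis
        proof (cases "a = z")
          case True
          then show ?thesis using PR_Id V offd[OF nxb] unfolding PR_def by auto
        next
          case az: False
          then obtain k' where k': "k' < length C" "(a,z) \<in> C ! k'" using cov_ex[OF cov] V by blast
          have "k' \<noteq> k" using k' False k by auto
          then have "c k' \<noteq> c k" using inj k k' by (auto simp: inj_on_def)
          then have "laplacian C c a z \<noteq> laplacian C c x b" using lap_val[OF pc k'] dxb by simp
          then show ?thesis using q V unfolding Qd_def by blast
        qed
      qed
    qed
  qed
next
  assume p: "\<forall>X\<in>set C. PR V w X"
  show "Qd V w (laplacian C c)" unfolding Qd_def
  proof (intro ballI impI)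
    fix x a b z assume V: "x \<in> V" "a \<in> V" "b \<in> V" "z \<in> V" and ne: "laplacian C c a z \<noteq> laplacian C c x b"
    show "w x a * w b z = 0"
    proof (cases "a = z \<or> x = b")
      case True
      then have "(a = z) \<noteq> (x = b)" using ne by auto
      then show ?thesis using PR_Id V unfolding PR_def by auto
    next
      case False
      then obtain k where k: "k < length C" "(a,z) \<in> C ! k" using cov_ex[OF cov] V by blast
      obtain k' where k': "k' < length C" "(x,b) \<in> C ! k'" using cov_ex[OF cov] V False by blast
      have "k \<noteq> k'" using lap_val[OF pc k] lap_val[OF pc k'] ne by auto
      then have "(x,b) \<notin> C ! k" using pc_disj[OF pc k(1) k'(1)] k' by auto
      moreover have "PR V w (C ! k)" using p k by simp
      ultimately show ?thesis using k V unfolding PR_def by blast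
    qed
  qed
qed

end

lemma completion_pc: assumes "precolored V L" shows "precolored V (completion V L)"
proof -
  have sub: "\<Union>(set L) \<subseteq> V \<times> V - Id_on V"
  proof
    fix p assume "p \<in> \<Union>(set L)"
    then obtain i where "i < length L" "p \<in> L ! i" by (auto simp: in_set_conv_nth)
    then show "p \<in> V \<times> V - Id_on V" using assms unfolding precolored_def by blast
  qed
  show ?thesis
    unfolding precolored_def completion_def
  proof (intro conjI allI impI)
    show "finite V" using assms by (simp add: precolored_def)
  next
    fix i assume "i < length (L @ [V \<times> V - Id_on V - \<Union> (set L)])"
    then show "(L @ [V \<times> V - Id_on V - \<Union> (set L)]) ! i \<subseteq> V \<times> V - Id_on V"
      using assms by (auto simp: nth_append precolored_def less_Suc_eq)
  next
    fix i j assume ij: "i < length (L @ [V \<times> V - Id_on V - \<Union> (set L)])"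
      "j < length (L @ [V \<times> V - Id_on V - \<Union> (set L)])" "i \<noteq> j"
    show "(L @ [V \<times> V - Id_on V - \<Union> (set L)]) ! i \<inter> (L @ [V \<times> V - Id_on V - \<Union> (set L)]) ! j = {}"
      using ij assms nth_mem[of i L] nth_mem[of j L]
      by (auto simp: nth_append precolored_def less_Suc_eq)
  qed
qed

lemma completion_cov: assumes "precolored V L" shows "\<Union>(set (completion V L)) = V \<times> V - Id_on V"
proof -
  have sub: "\<Union>(set L) \<subseteq> V \<times> V - Id_on V"
  proof
    fix p assume "p \<in> \<Union>(set L)"
    then obtain i where "i < length L" "p \<in> L ! i" by (auto simp: in_set_conv_nth)
    then show "p \<in> V \<times> V - Id_on V" using assms unfolding precolored_def by blast
  qed
  then show ?thesis by (auto simp: completion_def)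
qed

definition phi :: "'c set \<Rightarrow> ('a \<times> 'a) set \<Rightarrow> (('a \<times> 'c) \<times> ('a \<times> 'c)) set" where
  "phi Z Er = {((i, \<alpha>), (j, \<alpha>)) | i j \<alpha>. (i, j) \<in> Er \<and> \<alpha> \<in> Z}"

definition psi :: "'a set \<Rightarrow> ('c \<times> 'c) set \<Rightarrow> (('a \<times> 'c) \<times> ('a \<times> 'c)) set" where
  "psi T Fs = {((i, \<alpha>), (j, \<beta>)) | i j \<alpha> \<beta>. i \<in> T \<and> j \<in> T \<and> (\<alpha>, \<beta>) \<in> Fs}"

lemma mem_phi [simp]: "((a,b),(c,d)) \<in> phi Z Er \<longleftrightarrow> (a,c) \<in> Er \<and> b \<in> Z \<and> d = b"
  by (auto simp: phi_def)

lemma mem_psi [simp]: "((a,b),(c,d)) \<in> psi T Fs \<longleftrightarrow> a \<in> T \<and> c \<in> T \<and> (b,d) \<in> Fs"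
  by (auto simp: psi_def)

lemma fpe_eq: "free_prod_edges E Z T F = map (phi Z) E @ map (psi T) F"
  by (simp add: free_prod_edges_def phi_def psi_def)

lemma fpe_pc: assumes pE: "precolored T E" and pF: "precolored Z F"
  shows "precolored (T \<times> Z) (free_prod_edges E Z T F)"
  unfolding precolored_def fpe_eq
proof (intro conjI allI impI)
  show "finite (T \<times> Z)" using pE pF by (simp add: precolored_def)
next
  fix i assume i: "i < length (map (phi Z) E @ map (psi T) F)"
  show "(map (phi Z) E @ map (psi T) F) ! i \<subseteq> (T \<times> Z) \<times> (T \<times> Z) - Id_on (T \<times> Z)"
  proof (cases "i < length E")
    case True
    then have "E ! i \<subseteq> T \<times> T - Id_on T" using pE by (simp add: precolored_def)
    then show ?thesis using True by (auto simp: nth_append)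
  next
    case False
    have l: "i - length E < length F" using i False by simp
    have "F ! (i - length E) \<subseteq> Z \<times> Z - Id_on Z" using pF l by (simp add: precolored_def)
    then show ?thesis using False l by (auto simp: nth_append)
  qed
next
  fix i j assume ij: "i < length (map (phi Z) E @ map (psi T) F)" "j < length (map (phi Z) E @ map (psi T) F)" "i \<noteq> j"
  show "(map (phi Z) E @ map (psi T) F) ! i \<inter> (map (phi Z) E @ map (psi T) F) ! j = {}"
  proof (cases "i < length E"; cases "j < length E")
    assume a: "i < length E" "j < length E"
    then have "E ! i \<inter> E ! j = {}" using pE ij by (simp add: precolored_def)
    then show ?thesis using a by (auto simp: nth_append)
  next
    assume a: "i < length E" "\<not> j < length E"
    have l: "j - length E < length F" using ij a by simp
    have "F ! (j - length E) \<subseteq> Z \<times> Z - Id_on Z" using pF l by (simp add: precolored_def)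
    then show ?thesis using a l by (auto simp: nth_append)
  next
    assume a: "\<not> i < length E" "j < length E"
    have l: "i - length E < length F" using ij a by simp
    have "F ! (i - length E) \<subseteq> Z \<times> Z - Id_on Z" using pF l by (simp add: precolored_def)
    then show ?thesis using a l by (auto simp: nth_append)
  next
    assume a: "\<not> i < length E" "\<not> j < length E"
    have l: "i - length E < length F" "j - length E < length F" using ij a by auto
    have "F ! (i - length E) \<inter> F ! (j - length E) = {}" using pF ij a l by (simp add: precolored_def)
    then show ?thesis using a l by (auto simp: nth_append)
  qed
qed



theorem proposition7p1:
  fixes T :: "'a set" and E :: "('a \<times> 'a) set list"
    and Z :: "'c set" and F :: "('c \<times> 'c) set list"
    and c1 c2 :: "nat \<Rightarrow> complex"
    and w :: "'a \<times> 'c \<Rightarrow> 'a \<times> 'c \<Rightarrow> 'b::cstar_algebra"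
  assumes "precolored T E" and "precolored Z F"
    and "pc_connected T E"
    and "inj_on c1 {..< length (completion (T \<times> Z) (free_prod_edges (completion T E) Z T F))}"
    and "inj_on c2 {..< length (completion (T \<times> Z) (free_prod_edges E Z T F))}"
    and "magic_biunitary (T \<times> Z) w"
  shows "commutes_lap (T \<times> Z) w
           (laplacian (completion (T \<times> Z) (free_prod_edges (completion T E) Z T F)) c1)
         \<longleftrightarrow>
         commutes_lap (T \<times> Z) w
           (laplacian (completion (T \<times> Z) (free_prod_edges E Z T F)) c2)"
proof -
  note pE = assms(1) and pF = assms(2) and conn = assms(3)
  define V where "V = T \<times> Z"
  have finV: "finite V" using pE pF by (simp add: V_def precolored_def)
  interpret magic V w using finV assms(6) by unfold_locales (simp_all add: V_def)
  have pE': "precolored T (completion T E)" by (rule completion_pc[OF pE])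
  define C1 where "C1 = completion V (free_prod_edges (completion T E) Z T F)"
  define C2 where "C2 = completion V (free_prod_edges E Z T F)"
  have pc1: "precolored V C1" unfolding C1_def V_def by (intro completion_pc fpe_pc pE' pF)
  have pc2: "precolored V C2" unfolding C2_def V_def by (intro completion_pc fpe_pc pE pF)
  have cov1: "\<Union>(set C1) = V \<times> V - Id_on V" unfolding C1_def V_def by (intro completion_cov fpe_pc pE' pF)
  have cov2: "\<Union>(set C2) = V \<times> V - Id_on V" unfolding C2_def V_def by (intro completion_cov fpe_pc pE pF)
  have L1: "commutes_lap V w (laplacian C1 c1) \<longleftrightarrow> (\<forall>X\<in>set C1. PR V w X)"
    using commutes_Qd Qd_lap[OF pc1 cov1] assms(4) by (simp add: C1_def V_def)
  have L2: "commutes_lap V w (laplacian C2 c2) \<longleftrightarrow> (\<forall>X\<in>set C2. PR V w X)"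
    using commutes_Qd Qd_lap[OF pc2 cov2] assms(5) by (simp add: C2_def V_def)
  define MX where "MX = T \<times> T - Id_on T - \<Union>(set E)"
  define A where "A = phi Z ` set E"
  define B where "B = psi T ` set F"
  define R1 where "R1 = V \<times> V - Id_on V - \<Union>(A \<union> {phi Z MX} \<union> B)"
  define R2 where "R2 = V \<times> V - Id_on V - \<Union>(A \<union> B)"
  define S :: "(('a \<times> 'c) \<times> ('a \<times> 'c)) set" where "S = {(p,q). snd p = snd q}"
  have s1: "set C1 = A \<union> {phi Z MX} \<union> B \<union> {R1}"
    by (simp add: C1_def completion_def fpe_eq A_def B_def MX_def R1_def Un_ac insert_commute)
  have s2: "set C2 = A \<union> B \<union> {R2}"
    by (simp add: C2_def completion_def fpe_eq A_def B_def R2_def Un_ac)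
  have Esub: "\<And>Er. Er \<in> set E \<Longrightarrow> Er \<subseteq> T \<times> T - Id_on T"
    using pE by (auto simp: precolored_def in_set_conv_nth)
  have Fsub: "\<And>Fs. Fs \<in> set F \<Longrightarrow> Fs \<subseteq> Z \<times> Z - Id_on Z"
    using pF by (auto simp: precolored_def in_set_conv_nth)
  have S1: "R2 = phi Z MX \<union> R1"
    unfolding R1_def R2_def A_def B_def MX_def V_def using Esub Fsub by fastforce
  have S2: "phi Z MX = R2 \<inter> S"
    unfolding R2_def A_def B_def MX_def V_def S_def using Esub Fsub by fastforce
  have S3: "R1 = R2 - S"
    unfolding R1_def R2_def A_def B_def MX_def V_def S_def using Esub Fsub by fastforce
  have "(\<forall>X\<in>set C1. PR V w X) \<longleftrightarrow> (\<forall>X\<in>set C2. PR V w X)"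
  proof
    assume h: "\<forall>X\<in>set C1. PR V w X"
    then have "PR V w R2" unfolding S1 using s1 by (intro PR_Un) auto
    then show "\<forall>X\<in>set C2. PR V w X" using h s1 s2 by auto
  next
    assume h: "\<forall>X\<in>set C2. PR V w X"
    define R0 where "R0 = \<Union>A \<union> (\<Union>A)\<inverse>"
    have pA: "PR V w (\<Union>A)" using h s2 by (intro PR_Union) auto
    have pR0: "PR V w R0" unfolding R0_def by (intro PR_Un PR_converse pA)
    have R0sub: "R0 \<subseteq> V \<times> V" unfolding R0_def A_def V_def using Esub by fastforce
    have pR0s: "PR V w (R0\<^sup>*)" by (rule PR_rtrancl[OF pR0 R0sub])
    have snd_eq: "snd p = snd q" if "(p,q) \<in> R0\<^sup>*" for p q
      using that
    proof (induction rule: rtrancl_induct)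
      case (step y z)
      then show ?case unfolding R0_def A_def by (auto simp: phi_def)
    qed simp
    have lift: "((i,\<alpha>),(j,\<alpha>)) \<in> R0\<^sup>*" if "(i,j) \<in> (\<Union>(set E) \<union> (\<Union>(set E))\<inverse>)\<^sup>*" "\<alpha> \<in> Z" for i j \<alpha>
      using that(1)
    proof (induction rule: rtrancl_induct)
      case (step y z)
      have "((y,\<alpha>),(z,\<alpha>)) \<in> R0" using step(2) that(2) unfolding R0_def A_def by auto
      then show ?case using step(3) by (rule rtrancl_into_rtrancl[rotated])
    qed simp
    have "PR V w S"
    proof (rule PR_cong[OF pR0s])
      fix p q assume pq: "p \<in> V" "q \<in> V"
      show "(p,q) \<in> R0\<^sup>* \<longleftrightarrow> (p,q) \<in> S"
      proof
        assume "(p,q) \<in> R0\<^sup>*" then show "(p,q) \<in> S" using snd_eq by (simp add: S_def)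
      next
        assume "(p,q) \<in> S"
        then obtain i j \<alpha> where ij: "p = (i,\<alpha>)" "q = (j,\<alpha>)" "i \<in> T" "j \<in> T" "\<alpha> \<in> Z"
          using pq by (auto simp: S_def V_def)
        have "(i,j) \<in> (\<Union>(set E) \<union> (\<Union>(set E))\<inverse>)\<^sup>*" using conn ij by (simp add: pc_connected_def Let_def)
        then show "(p,q) \<in> R0\<^sup>*" using lift ij by simp
      qed
    qed
    moreover have "PR V w R2" using h s2 by simp
    ultimately have "PR V w (phi Z MX)" "PR V w R1" unfolding S2 S3 by (auto intro: PR_Int PR_Diff)
    then show "\<forall>X\<in>set C1. PR V w X" using h s1 s2 by auto
  qed
  then show ?thesis using L1 L2 by (simp add: C1_def C2_def V_def)
qed


end
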